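(* Let $p\ge2$ be an integer, $A_1\in GL_{n_1}(\mathbb{C})$, $B_1\in GL_{n_2}(\mathbb{C})$, and let $\widetilde{S_1}$ be an $n_2\times n_1$ matrix whose entries are meromorphic at $\widetilde1=(1,0)\in\widetilde{\mathbb{C}^\star}$. If $\phi_p(\widetilde{S_1})A_1=B_1\widetilde{S_1}$, then the entries of $\widetilde{S_1}$ are Laurent polynomials in $\widetilde{\log}$.
   Context: $\widetilde{\mathbb{C}^\star}=\{(re^{ib},b):r>0,b\in\mathbb{R}\}$ is the universal cover of $\mathbb{C}^\star$, $\widetilde{\log}(re^{ib},b)=\log r+ib$ (a biholomorphism onto $\mathbb{C}$), and $\phi_p(\widetilde{S_1})=\widetilde{S_1}\circ\phi_p$ where $\phi_p(re^{ib},b)=(r^pe^{ipb},pb)$ (which fixes $\widetilde1$). "Meromorphic at $\widetilde1$" means meromorphic on some neighbourhood of $\widetilde1$. *)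

theory Defs
  imports "HOL-Complex_Analysis.Complex_Analysis"
begin

definition univ_cover :: "(complex \<times> real) set" where
  "univ_cover = {(complex_of_real r * cis b, b) | r b. r > 0}"

definition tilde_one :: "complex \<times> real" where
  "tilde_one = (1, 0)"

definition ltilde :: "complex \<times> real \<Rightarrow> complex" where
  "ltilde x = complex_of_real (ln (cmod (fst x))) + \<i> * complex_of_real (snd x)"

text \<open>Inverse of the biholomorphism log~ : univ_cover -> C, w |-> (e^w, Im w);
  it is the chart defining the complex structure of the universal cover.\<close>
definition cover_of :: "complex \<Rightarrow> complex \<times> real" where
  "cover_of w = (exp w, Im w)"

definition phi :: "nat \<Rightarrow> complex \<times> real \<Rightarrow> complex \<times> real" where
  "phi p x = (complex_of_real (cmod (fst x) ^ p) * cis (real p * snd x), real p * snd x)"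

definition meromorphic_at_tilde_one :: "(complex \<times> real \<Rightarrow> complex) \<Rightarrow> bool" where
  "meromorphic_at_tilde_one f \<longleftrightarrow>
     (\<exists>U. open U \<and> ltilde tilde_one \<in> U \<and> (\<lambda>w. f (cover_of w)) meromorphic_on U)"

definition laurent_poly_in_ltilde :: "(complex \<times> real \<Rightarrow> complex) \<Rightarrow> bool" where
  "laurent_poly_in_ltilde f \<longleftrightarrow>
     (\<exists>K :: int set. \<exists>c :: int \<Rightarrow> complex. finite K \<and>
        (\<forall>\<^sub>F w in at (ltilde tilde_one).
            f (cover_of w) = (\<Sum>k\<in>K. c k * ltilde (cover_of w) powi k)))"

end

theory Submission
  imports Defs
begin
lemma lt1: "ltilde tilde_one = 0" by (simp add: ltilde_def tilde_one_def)
lemma ltc: "ltilde (cover_of w) = w" by (simp add: ltilde_def cover_of_def complex_eq_iff)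
lemma phic: "phi p (cover_of w) = cover_of (of_nat p * w)"
  by (simp add: phi_def cover_of_def exp_eq_polar[of "of_nat p * w"] exp_of_nat_mult[symmetric] flip: exp_of_real)

lemma lin: fixes B :: "complex^'n^'n" and C :: "complex^'m^'m"
  shows "linear (\<lambda>X::complex^'m^'n. B ** X ** C)"
  by (rule linearI) (simp_all add: matrix_matrix_mult_def vec_eq_iff sum.distrib algebra_simps sum_distrib_left scaleR_sum_right)

lemma bnd: fixes B :: "complex^'n^'n" and C :: "complex^'m^'m"
  shows "\<exists>K>0. \<forall>X::complex^'m^'n. norm (B ** X ** C) \<le> norm X * K"
  using bounded_linear.pos_bounded[OF lin[unfolded linear_conv_bounded_linear]] by blast

lemma scl: fixes X :: "complex^'m^'n" shows "(r *\<^sub>R X) ** C = r *\<^sub>R (X ** C)"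
  by (simp add: matrix_matrix_mult_def vec_eq_iff scaleR_sum_right algebra_simps)

lemma linX: "(\<lambda>x. of_nat p * x) has_laurent_expansion fps_to_fls (fps_const (of_nat p) * fps_X)"
proof -
  have "(\<lambda>x. of_nat p * x) has_laurent_expansion fls_const (of_nat p) * fls_X"
    by (intro laurent_expansion_intros)
  moreover have "fls_const (of_nat p) * fls_X = fps_to_fls (fps_const (of_nat p) * (fps_X :: complex fps))"
    by (simp add: fls_times_fps_to_fls)
  ultimately show ?thesis by simp
qed

theorem mainTheorem15:
  fixes p :: nat
    and A1 :: "complex ^ 'n1 ^ 'n1"
    and B1 :: "complex ^ 'n2 ^ 'n2"
    and S :: "complex \<times> real \<Rightarrow> complex ^ 'n1 ^ 'n2"
  assumes "p \<ge> 2"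
    and "invertible A1"
    and "invertible B1"
    and "\<And>i j. meromorphic_at_tilde_one (\<lambda>x. S x $ i $ j)"
    and "\<forall>\<^sub>F w in at (ltilde tilde_one).
           S (phi p (cover_of w)) ** A1 = B1 ** S (cover_of w)"
  shows "\<forall>i j. laurent_poly_in_ltilde (\<lambda>x. S x $ i $ j)"
proof -
  define f where "f i j w = S (cover_of w) $ i $ j" for i j w
  have "\<exists>G. f i j has_laurent_expansion G" for i j
  proof -
    obtain U where "open U" "0 \<in> U" "(\<lambda>w. S (cover_of w) $ i $ j) meromorphic_on U"
      using assms(4)[of i j] unfolding meromorphic_at_tilde_one_def lt1 by blast
    then show ?thesis unfolding meromorphic_on_def f_def by force
  qed
  then obtain F where F: "\<And>i j. f i j has_laurent_expansion F i j" by metis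
  define G where "G = fps_const (of_nat p :: complex) * fps_X"
  have p0: "(of_nat p :: complex) \<noteq> 0" using assms(1) by simp
  have FG: "(\<lambda>w. f i j (of_nat p * w)) has_laurent_expansion fls_compose_fps (F i j) G" for i j
  proof -
    have "(f i j \<circ> (\<lambda>w. of_nat p * w)) has_laurent_expansion fls_compose_fps (F i j) G"
      unfolding G_def
      by (rule has_laurent_expansion_compose[OF F linX]) (use p0 in auto)
    then show ?thesis by (simp add: o_def)
  qed
  have ev: "\<forall>\<^sub>F w in at 0. S (cover_of (of_nat p * w)) ** A1 = B1 ** S (cover_of w)"
    using assms(5) by (simp add: lt1 phic)
  have coef: "(\<Sum>l\<in>UNIV. fls_nth (F i l) n * of_nat p powi n * A1 $ l $ j) = (\<Sum>l\<in>UNIV. B1 $ i $ l * fls_nth (F l j) n)" for i j n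
  proof -
    have e1: "(\<lambda>w. \<Sum>l\<in>UNIV. f i l (of_nat p * w) * A1 $ l $ j) has_laurent_expansion (\<Sum>l\<in>UNIV. fls_compose_fps (F i l) G * fls_const (A1 $ l $ j))"
      by (intro has_laurent_expansion_sum has_laurent_expansion_cmult_right FG)
    have e2: "(\<lambda>w. \<Sum>l\<in>UNIV. B1 $ i $ l * f l j w) has_laurent_expansion (\<Sum>l\<in>UNIV. fls_const (B1 $ i $ l) * F l j)"
      by (intro has_laurent_expansion_sum has_laurent_expansion_cmult_left F)
    have evr: "\<forall>\<^sub>F w in at 0. (\<Sum>l\<in>UNIV. B1 $ i $ l * f l j w) = (\<Sum>l\<in>UNIV. f i l (of_nat p * w) * A1 $ l $ j)"
      using ev by eventually_elim (simp add: f_def matrix_matrix_mult_def vec_eq_iff)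
    have e3: "(\<lambda>w. \<Sum>l\<in>UNIV. f i l (of_nat p * w) * A1 $ l $ j) has_laurent_expansion (\<Sum>l\<in>UNIV. fls_const (B1 $ i $ l) * F l j)"
      using iffD1[OF has_laurent_expansion_cong[OF evr refl] e2] .
    have "(\<Sum>l\<in>UNIV. fls_compose_fps (F i l) G * fls_const (A1 $ l $ j)) = (\<Sum>l\<in>UNIV. fls_const (B1 $ i $ l) * F l j)"
      using has_laurent_expansion_unique[OF e1 e3] .
    then have "fls_nth (\<Sum>l\<in>UNIV. fls_compose_fps (F i l) G * fls_const (A1 $ l $ j)) n = fls_nth (\<Sum>l\<in>UNIV. fls_const (B1 $ i $ l) * F l j) n"
      by simp
    then show ?thesis unfolding fls_nth_sum G_def using p0
      by (simp add: fls_nth_fls_compose_fps_linear)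
  qed
  define M where "M n = (\<chi> i j. fls_nth (F i j) n)" for n
  define r where "r n = real p powi n" for n
  have sc: "\<And>(x::real) (z::complex). x *\<^sub>R z = of_real x * z" by (simp add: scaleR_conv_of_real)
  have rel: "r n *\<^sub>R (M n ** A1) = B1 ** M n" for n
    using coef[of _ n _]
    by (simp add: vec_eq_iff matrix_matrix_mult_def M_def r_def sc sum_distrib_left mult_ac)
  obtain C where C: "A1 ** C = mat 1" using assms(2) unfolding invertible_def by blast
  have rel2: "r n *\<^sub>R M n = B1 ** M n ** C" for n
  proof -
    have "r n *\<^sub>R M n = r n *\<^sub>R (M n ** A1 ** C)" by (simp add: matrix_mul_assoc[symmetric] C)
    also have "\<dots> = (r n *\<^sub>R (M n ** A1)) ** C" by (simp only: scl)
    also have "\<dots> = B1 ** M n ** C" by (simp only: rel)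
    finally show ?thesis .
  qed
  obtain K where K: "K > 0" "\<And>X. norm (B1 ** X ** C) \<le> norm X * K" using bnd by blast
  obtain N0 where N0: "K < 2 ^ N0" using real_arch_pow[of 2 K] by auto
  have upper: "n \<le> int N0" if "fls_nth (F i j) n \<noteq> 0" for i j n
  proof (rule ccontr)
    assume "\<not> n \<le> int N0"
    then have nn: "n = int (nat n)" "N0 \<le> nat n" "0 \<le> n" by auto
    have "M n \<noteq> 0" using that by (auto simp: M_def vec_eq_iff)
    then have np: "norm (M n) > 0" by simp
    have "\<bar>r n\<bar> * norm (M n) \<le> norm (M n) * K" using K(2)[of "M n"] rel2[of n] norm_scaleR[of "r n" "M n"] by metis
    then have "\<bar>r n\<bar> \<le> K" using np by (simp add: mult.commute)
    moreover have "r n = real p ^ nat n" unfolding r_def using nn(3) by (simp add: power_int_def)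
    moreover have "(2::real) ^ N0 \<le> real p ^ nat n"
    proof -
      have "(2::real) ^ N0 \<le> 2 ^ nat n" using nn(2) by (rule power_increasing) simp
      also have "\<dots> \<le> real p ^ nat n" using assms(1) by (intro power_mono) auto
      finally show ?thesis .
    qed
    ultimately show False using N0 by simp
  qed
  show ?thesis
  proof (intro allI)
    fix i j
    define Ks where "Ks = {fls_subdegree (F i j)..int N0}"
    define c where "c = fls_nth (F i j)"
    have "(\<lambda>w. \<Sum>k\<in>Ks. c k * w powi k) has_laurent_expansion (\<Sum>k\<in>Ks. fls_const (c k) * fls_X_intpow k)"
      by (intro laurent_expansion_intros)
    moreover have "(\<Sum>k\<in>Ks. fls_const (c k) * fls_X_intpow k) = F i j"
    proof (rule fls_eqI)
      fix n
      show "fls_nth (\<Sum>k\<in>Ks. fls_const (c k) * fls_X_intpow k) n = fls_nth (F i j) n"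
      proof -
        have "fls_nth (\<Sum>k\<in>Ks. fls_const (c k) * fls_X_intpow k) n = (\<Sum>k\<in>Ks. if n = k then c k else 0)"
          unfolding fls_nth_sum by (intro sum.cong) auto
        also have "\<dots> = (if n \<in> Ks then c n else 0)" by (simp add: Ks_def)
        also have "\<dots> = fls_nth (F i j) n"
          using upper[of i j n] fls_eq0_below_subdegree[of n "F i j"] by (auto simp: Ks_def c_def)
        finally show ?thesis .
      qed
    qed
    ultimately have "\<forall>\<^sub>F w in at 0. eval_fls (F i j) w = (\<Sum>k\<in>Ks. c k * w powi k)"
      by (simp add: has_laurent_expansion_def)
    moreover have "\<forall>\<^sub>F w in at 0. eval_fls (F i j) w = f i j w"
      using F[of i j] by (simp add: has_laurent_expansion_def)
    ultimately have "\<forall>\<^sub>F w in at 0. S (cover_of w) $ i $ j = (\<Sum>k\<in>Ks. c k * ltilde (cover_of w) powi k)"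
      by eventually_elim (simp add: f_def ltc)
    then show "laurent_poly_in_ltilde (\<lambda>x. S x $ i $ j)"
      unfolding laurent_poly_in_ltilde_def lt1 Ks_def by blast
  qed
qed
end
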